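(* Let $m\ge2$ and let $\mathcal{P}^{OC}_m$ be the set of partial matchings $\pi$ of $[m]$ (set partitions of $[m]$ with all blocks of size at most $2$) having at least one arc, such that every opener of $\pi$ is smaller than every closer of $\pi$, $1$ is an opener and $m$ is a closer (fixed points may occur anywhere strictly between $1$ and $m$). For $\pi\in\mathcal{P}^{OC}_m$ let $c_1<c_2<\dots<c_r$ be the closers of $\pi$, let $\rho_\pi(c_i)=c_{r+1-i}$ and $\rho_\pi(x)=x$ for every other $x\in[m]$, and define $\Phi(\pi)$ to be the partial matching with arcs $\{(a,\rho_\pi(b)):(a,b)\text{ an arc of }\pi\}$ and the same fixed points as $\pi$. Then $\Phi$ is an involution on $\mathcal{P}^{OC}_m$ and for every $t\ge2$, $$\mathrm{ne}_t(\Phi(\pi))=\mathrm{cr}_t(\pi),\qquad \mathrm{cr}_t(\Phi(\pi))=\mathrm{ne}_t(\pi).$$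
   Context: A partial matching of $[m]=\{1,\dots,m\}$ is a set partition of $[m]$ all of whose blocks have size $1$ or $2$. A block $\{i,j\}$ with $i<j$ is written as the arc $(i,j)$; $i$ is called an opener and $j$ a closer. A singleton block $\{i\}$ is called a fixed point. For $t\ge 2$, a $t$-crossing is a set of $t$ arcs $(i_1,j_1),\dots,(i_t,j_t)$ with $i_1<i_2<\dots<i_t<j_1<j_2<\dots<j_t$, and a $t$-nesting is a set of $t$ arcs with $i_1<i_2<\dots<i_t<j_t<j_{t-1}<\dots<j_1$. For a partial matching $\pi$ and $t\ge2$, $\mathrm{cr}_t(\pi)$ and $\mathrm{ne}_t(\pi)$ denote the number of $t$-crossings and of $t$-nestings of $\pi$. *)

theory Defs
  imports Main "HOL-Library.Disjoint_Sets"
begin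

definition partial_matching :: "nat \<Rightarrow> nat set set \<Rightarrow> bool" where
  "partial_matching m P \<longleftrightarrow> partition_on {1..m} P \<and> (\<forall>B\<in>P. card B = 1 \<or> card B = 2)"

definition arcs :: "nat set set \<Rightarrow> (nat \<times> nat) set" where
  "arcs P = {(i, j). i < j \<and> {i, j} \<in> P}"

definition openers :: "nat set set \<Rightarrow> nat set" where
  "openers P = fst ` arcs P"

definition closers :: "nat set set \<Rightarrow> nat set" where
  "closers P = snd ` arcs P"

definition fixed_points :: "nat set set \<Rightarrow> nat set" where
  "fixed_points P = {i. {i} \<in> P}"

definition is_crossing :: "nat set set \<Rightarrow> nat \<Rightarrow> (nat \<times> nat) set \<Rightarrow> bool" where
  "is_crossing P t S \<longleftrightarrow> S \<subseteq> arcs P \<and>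
     (\<exists>a b. S = (\<lambda>k. (a k, b k)) ` {..<t} \<and>
        (\<forall>k. Suc k < t \<longrightarrow> a k < a (Suc k) \<and> b k < b (Suc k)) \<and> a (t - 1) < b 0)"

definition is_nesting :: "nat set set \<Rightarrow> nat \<Rightarrow> (nat \<times> nat) set \<Rightarrow> bool" where
  "is_nesting P t S \<longleftrightarrow> S \<subseteq> arcs P \<and>
     (\<exists>a b. S = (\<lambda>k. (a k, b k)) ` {..<t} \<and>
        (\<forall>k. Suc k < t \<longrightarrow> a k < a (Suc k) \<and> b (Suc k) < b k) \<and> a (t - 1) < b (t - 1))"

definition cr :: "nat \<Rightarrow> nat set set \<Rightarrow> nat" where
  "cr t P = card {S. is_crossing P t S}"

definition ne :: "nat \<Rightarrow> nat set set \<Rightarrow> nat" where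
  "ne t P = card {S. is_nesting P t S}"

definition POC :: "nat \<Rightarrow> nat set set set" where
  "POC m = {P. partial_matching m P \<and> arcs P \<noteq> {} \<and>
              (\<forall>x\<in>openers P. \<forall>c\<in>closers P. x < c) \<and>
              1 \<in> openers P \<and> m \<in> closers P}"

definition rho :: "nat set set \<Rightarrow> nat \<Rightarrow> nat" where
  "rho P x = (let cs = sorted_list_of_set (closers P) in
     if x \<in> closers P then rev cs ! (THE i. i < length cs \<and> cs ! i = x) else x)"

definition Phi :: "nat set set \<Rightarrow> nat set set" where
  "Phi P = {{a, rho P b} | a b. (a, b) \<in> arcs P} \<union> {{x} | x. x \<in> fixed_points P}"

end

theory Submission imports Defs begin

definition rv :: "nat set \<Rightarrow> nat \<Rightarrow> nat" where
  "rv C x = (let cs = sorted_list_of_set C in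
     if x \<in> C then rev cs ! (THE i. i < length cs \<and> cs ! i = x) else x)"

lemma rho_rv: "rho P = rv (closers P)"
  by (auto simp: rho_def rv_def fun_eq_iff)

lemma rv_props:
  assumes fin: "finite C"
  shows "\<And>x. x \<in> C \<Longrightarrow> rv C x \<in> C"
    and "\<And>x. x \<notin> C \<Longrightarrow> rv C x = x"
    and "\<And>x. rv C (rv C x) = x"
    and "\<And>x y. x \<in> C \<Longrightarrow> y \<in> C \<Longrightarrow> x < y \<Longrightarrow> rv C y < rv C x"
proof -
  define cs where "cs = sorted_list_of_set C"
  define n where "n = length cs"
  have sc: "sorted_wrt (<) cs" using strict_sorted_list_of_set[of C] by (simp add: cs_def)
  have dc: "distinct cs" using fin by (simp add: cs_def)
  have setc: "set cs = C" using fin by (simp add: cs_def)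
  have uniq: "\<And>i. i < n \<Longrightarrow> (THE j. j < length cs \<and> cs ! j = cs ! i) = i"
    by (rule the_equality) (use dc n_def nth_eq_iff_index_eq in auto)
  have ex: "\<And>x. x \<in> C \<Longrightarrow> \<exists>i<n. cs ! i = x" using setc by (auto simp: n_def in_set_conv_nth)
  have rvi: "\<And>i. i < n \<Longrightarrow> rv C (cs ! i) = cs ! (n - Suc i)"
  proof -
    fix i assume i: "i < n"
    have "cs ! i \<in> C" using i setc n_def by auto
    then show "rv C (cs ! i) = cs ! (n - Suc i)"
      using uniq[OF i] i by (simp add: rv_def cs_def[symmetric] Let_def rev_nth n_def)
  qed
  have lt: "\<And>i j. i < j \<Longrightarrow> j < n \<Longrightarrow> cs ! i < cs ! j"
    using sc by (simp add: sorted_wrt_nth_less n_def)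
  show "\<And>x. x \<in> C \<Longrightarrow> rv C x \<in> C"
  proof -
    fix x assume "x \<in> C" then obtain i where "i < n" "cs ! i = x" using ex by blast
    then show "rv C x \<in> C" using rvi setc n_def by auto
  qed
  show nC: "\<And>x. x \<notin> C \<Longrightarrow> rv C x = x" by (simp add: rv_def)
  show "\<And>x. rv C (rv C x) = x"
  proof -
    fix x show "rv C (rv C x) = x"
    proof (cases "x \<in> C")
      case True
      then obtain i where i: "i < n" "cs ! i = x" using ex by blast
      have "n - Suc i < n" using i by auto
      have "rv C x = cs ! (n - Suc i)" using rvi i by metis
      then have "rv C (rv C x) = cs ! (n - Suc (n - Suc i))" using rvi[OF \<open>n - Suc i < n\<close>] by simp
      also have "n - Suc (n - Suc i) = i" using i by auto
      finally show ?thesis using i by simp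
    qed (simp add: nC)
  qed
  show "\<And>x y. x \<in> C \<Longrightarrow> y \<in> C \<Longrightarrow> x < y \<Longrightarrow> rv C y < rv C x"
  proof -
    fix x y assume x: "x \<in> C" and y: "y \<in> C" and xy: "x < y"
    obtain i where i: "i < n" "cs ! i = x" using ex x by blast
    obtain j where j: "j < n" "cs ! j = y" using ex y by blast
    have "i < j"
    proof (rule ccontr)
      assume "\<not> i < j"
      then have "j < i \<or> j = i" by auto
      then show False using lt[of j i] i j xy by auto
    qed
    then have "cs ! (n - Suc j) < cs ! (n - Suc i)" using lt[of "n - Suc j" "n - Suc i"] i j by auto
    moreover have "rv C x = cs ! (n - Suc i)" using rvi i by metis
    moreover have "rv C y = cs ! (n - Suc j)" using rvi j by metis
    ultimately show "rv C y < rv C x" by simp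
  qed
qed

lemma POC_D:
  assumes "P \<in> POC m"
  shows "partition_on {1..m} P" "\<And>B. B \<in> P \<Longrightarrow> card B = 1 \<or> card B = 2"
    "\<And>x c. x \<in> openers P \<Longrightarrow> c \<in> closers P \<Longrightarrow> x < c"
    "arcs P \<noteq> {}" "1 \<in> openers P" "m \<in> closers P"
  using assms by (auto simp: POC_def partial_matching_def)

lemma part_uniq:
  assumes "partition_on A P" "B1 \<in> P" "B2 \<in> P" "x \<in> B1" "x \<in> B2"
  shows "B1 = B2"
  using assms unfolding partition_on_def disjoint_def by blast

lemma arcs_sub:
  assumes "partition_on {1..m} P"
  shows "arcs P \<subseteq> {1..m} \<times> {1..m}"
proof
  fix p assume "p \<in> arcs P"
  then obtain i j where p: "p = (i,j)" "{i,j} \<in> P" by (auto simp: arcs_def)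
  then have "i \<in> \<Union>P" "j \<in> \<Union>P" by auto
  then show "p \<in> {1..m} \<times> {1..m}" using p assms partition_onD1 by blast
qed

lemma closers_sub:
  assumes "partition_on {1..m} P"
  shows "closers P \<subseteq> {1..m}" "finite (closers P)"
proof -
  have "snd ` arcs P \<subseteq> snd ` ({1..m} \<times> {1..m})" using arcs_sub[OF assms] by (rule image_mono)
  moreover have "snd ` ({1..m} \<times> {1..m}) \<subseteq> {1..m}" by auto
  ultimately show 1: "closers P \<subseteq> {1..m}" unfolding closers_def by (rule subset_trans)
  show "finite (closers P)" using finite_subset[OF 1] by simp
qed

locale poc =
  fixes m P
  assumes inP: "P \<in> POC m"
begin

abbreviation "f \<equiv> rho P"
abbreviation "C \<equiv> closers P"
abbreviation "Op \<equiv> openers P"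

lemma part: "partition_on {1..m} P" using POC_D[OF inP] by auto
lemma finC: "finite C" using closers_sub[OF part] by auto
lemma Csub: "C \<subseteq> {1..m}" using closers_sub[OF part] by auto
lemma OC: "x \<in> Op \<Longrightarrow> c \<in> C \<Longrightarrow> x < c" using POC_D(3)[OF inP] by auto
lemma OnC: "x \<in> Op \<Longrightarrow> x \<notin> C" using OC by blast

lemma fC: "x \<in> C \<Longrightarrow> f x \<in> C" using rv_props(1)[OF finC] by (simp add: rho_rv)
lemma fnC: "x \<notin> C \<Longrightarrow> f x = x" using rv_props(2)[OF finC] by (simp add: rho_rv)
lemma ff: "f (f x) = x" using rv_props(3)[OF finC] by (simp add: rho_rv)
lemma fmono: "x \<in> C \<Longrightarrow> y \<in> C \<Longrightarrow> x < y \<Longrightarrow> f y < f x"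
  using rv_props(4)[OF finC] by (simp add: rho_rv)
lemma fC_iff: "f x \<in> C \<longleftrightarrow> x \<in> C" using fC ff fnC by metis
lemma f_inj: "inj f" by (metis ff injI)
lemma fimgC: "f ` C = C"
proof
  show "f ` C \<subseteq> C" using fC by blast
  show "C \<subseteq> f ` C"
  proof
    fix x assume "x \<in> C"
    then have "f x \<in> C" by (rule fC)
    moreover have "x = f (f x)" by (simp add: ff)
    ultimately show "x \<in> f ` C" by blast
  qed
qed
lemma fimg_range: "f ` {1..m} = {1..m}"
proof
  show 1: "f ` {1..m} \<subseteq> {1..m}"
  proof
    fix y assume "y \<in> f ` {1..m}"
    then obtain x where x: "x \<in> {1..m}" "y = f x" by blast
    show "y \<in> {1..m}"
    proof (cases "x \<in> C")
      case True then show ?thesis using fC Csub x by blast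
    next
      case False then show ?thesis using fnC x by simp
    qed
  qed
  show "{1..m} \<subseteq> f ` {1..m}"
  proof
    fix x assume "x \<in> {1..m}"
    then have "f x \<in> {1..m}" using 1 by blast
    moreover have "x = f (f x)" by (simp add: ff)
    ultimately show "x \<in> f ` {1..m}" by blast
  qed
qed

lemma arc_O: "(a,b) \<in> arcs P \<Longrightarrow> a \<in> Op" by (force simp: openers_def)
lemma arc_C: "(a,b) \<in> arcs P \<Longrightarrow> b \<in> C" by (force simp: closers_def)

lemma Phi_img: "Phi P = (`) f ` P"
proof
  show "Phi P \<subseteq> (`) f ` P"
  proof
    fix B assume "B \<in> Phi P"
    then consider a b where "B = {a, f b}" "(a,b) \<in> arcs P" | x where "B = {x}" "{x} \<in> P"
      by (auto simp: Phi_def fixed_points_def)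
    then show "B \<in> (`) f ` P"
    proof cases
      case 1
      have "f a = a" using fnC OnC arc_O[OF 1(2)] by blast
      then have "B = f ` {a,b}" using 1 by auto
      moreover have "{a,b} \<in> P" using 1 by (auto simp: arcs_def)
      ultimately show ?thesis by blast
    next
      case 2
      have "x \<notin> C"
      proof
        assume "x \<in> C"
        then obtain i where i: "(i,x) \<in> arcs P" by (auto simp: closers_def)
        then have "{i,x} \<in> P" "i < x" by (auto simp: arcs_def)
        then have "{i,x} = {x}" using part_uniq[OF part _ 2(2), of "{i,x}" x] by auto
        then show False using \<open>i < x\<close> by auto
      qed
      then have "B = f ` {x}" using 2 fnC by auto
      then show ?thesis using 2 by blast
    qed
  qed
next
  show "(`) f ` P \<subseteq> Phi P"
  proof
    fix B' assume "B' \<in> (`) f ` P"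
    then obtain B where B: "B \<in> P" "B' = f ` B" by auto
    from POC_D(2)[OF inP B(1)] show "B' \<in> Phi P"
    proof
      assume "card B = 1"
      then obtain x where "B = {x}" by (auto simp: card_1_singleton_iff)
      moreover have "x \<notin> C"
      proof
        assume "x \<in> C"
        then obtain i where i: "(i,x) \<in> arcs P" by (auto simp: closers_def)
        then have "{i,x} \<in> P" "i < x" by (auto simp: arcs_def)
        then have "{i,x} = {x}" using part_uniq[OF part _ B(1), of "{i,x}" x] \<open>B = {x}\<close> by auto
        then show False using \<open>i < x\<close> by auto
      qed
      ultimately show ?thesis using B fnC by (auto simp: Phi_def fixed_points_def)
    next
      assume "card B = 2"
      then obtain i j where ij: "B = {i,j}" "i \<noteq> j" by (auto simp: card_2_iff)
      have "\<exists>a b. (a,b) \<in> arcs P \<and> B = {a,b}"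
      proof (cases "i < j")
        case True then show ?thesis using ij B by (auto simp: arcs_def)
      next
        case False then have "j < i" using ij by auto
        have "{j,i} \<in> P" using ij B by (simp add: insert_commute)
        then have "(j,i) \<in> arcs P" using \<open>j < i\<close> by (simp add: arcs_def)
        moreover have "B = {j,i}" using ij by (simp add: insert_commute)
        ultimately show ?thesis by blast
      qed
      then obtain a b where ab: "(a,b) \<in> arcs P" "B = {a,b}" by blast
      have "f a = a" using fnC OnC arc_O[OF ab(1)] by blast
      then have "B' = {a, f b}" using ab B by auto
      then show ?thesis using ab by (auto simp: Phi_def)
    qed
  qed
qed

definition h :: "nat \<times> nat \<Rightarrow> nat \<times> nat" where "h = (\<lambda>(a,b). (a, f b))"

lemma hh: "h (h p) = p" by (cases p) (simp add: h_def ff)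
lemma h_inj: "inj h" by (metis hh injI)

lemma mem_Phi: "B \<in> Phi P \<longleftrightarrow> f ` B \<in> P"
proof
  assume "B \<in> Phi P"
  then obtain B0 where "B0 \<in> P" "B = f ` B0" unfolding Phi_img by blast
  moreover have "f ` (f ` B0) = B0" by (simp add: image_image ff)
  ultimately show "f ` B \<in> P" by simp
next
  assume "f ` B \<in> P"
  moreover have "B = f ` (f ` B)" by (simp add: image_image ff)
  ultimately show "B \<in> Phi P" unfolding Phi_img by blast
qed

lemma arcs_Phi: "arcs (Phi P) = h ` arcs P"
proof
  show "h ` arcs P \<subseteq> arcs (Phi P)"
  proof
    fix q assume "q \<in> h ` arcs P"
    then obtain a b where ab: "(a,b) \<in> arcs P" "q = (a, f b)" by (auto simp: h_def)
    have a: "a \<in> Op" "f a = a" using arc_O[OF ab(1)] fnC OnC by auto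
    have "f b \<in> C" using fC arc_C[OF ab(1)] by auto
    then have "a < f b" using OC a by auto
    moreover have "f ` {a, f b} \<in> P" using ab a ff by (auto simp: arcs_def)
    ultimately show "q \<in> arcs (Phi P)" using ab mem_Phi by (auto simp: arcs_def)
  qed
next
  show "arcs (Phi P) \<subseteq> h ` arcs P"
  proof
    fix q assume "q \<in> arcs (Phi P)"
    then obtain i j where q: "q = (i,j)" "i < j" "{f i, f j} \<in> P"
      using mem_Phi by (auto simp: arcs_def)
    have ne: "f i \<noteq> f j"
    proof
      assume "f i = f j"
      then have "f (f i) = f (f j)" by simp
      then show False using ff q(2) by simp
    qed
    show "q \<in> h ` arcs P"
    proof (cases "f i < f j")
      case True
      then have ar: "(f i, f j) \<in> arcs P" using q by (auto simp: arcs_def)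
      have "f i \<notin> C" using OnC arc_O[OF ar] by auto
      then have "i \<notin> C" using fC_iff by auto
      then have "f i = i" using fnC by auto
      then have "(i, f j) \<in> arcs P" using ar by simp
      then have "h (i, f j) = q" using q by (simp add: h_def ff)
      then show ?thesis using \<open>(i, f j) \<in> arcs P\<close> by force
    next
      case False
      then have "f j < f i" using ne by auto
      then have ar: "(f j, f i) \<in> arcs P" using q by (auto simp: arcs_def insert_commute)
      have "f j \<notin> C" using OnC arc_O[OF ar] by auto
      then have "j \<notin> C" using fC_iff by auto
      then have "f j = j" using fnC by auto
      then have "j \<in> Op" using arc_O[OF ar] by simp
      have "i \<in> C" using arc_C[OF ar] fC_iff by auto
      then have "j < i" using OC \<open>j \<in> Op\<close> by auto
      then show ?thesis using q by auto
    qed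
  qed
qed

lemma closers_Phi: "closers (Phi P) = C"
  unfolding closers_def arcs_Phi using fimgC by (force simp: h_def closers_def image_iff)

lemma openers_Phi: "openers (Phi P) = Op"
  unfolding openers_def arcs_Phi by (force simp: h_def image_iff)

lemma rho_Phi: "rho (Phi P) = f"
  by (simp add: rho_def closers_Phi fun_eq_iff)

lemma Phi_POC: "Phi P \<in> POC m"
proof -
  have "partition_on (f ` {1..m}) ((`) f ` P - {{}})"
    using partition_on_inj_image[OF part] f_inj by (meson inj_on_subset subset_UNIV)
  moreover have "{} \<notin> (`) f ` P" using partition_onD3[OF part] by auto
  ultimately have "partition_on {1..m} (Phi P)" using fimg_range Phi_img by simp
  moreover have "\<forall>B\<in>Phi P. card B = 1 \<or> card B = 2"
    using POC_D(2)[OF inP] Phi_img f_inj by (auto simp: card_image inj_on_subset)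
  moreover have "arcs (Phi P) \<noteq> {}" using arcs_Phi POC_D(4)[OF inP] by auto
  ultimately show ?thesis using inP
    by (simp add: POC_def partial_matching_def openers_Phi closers_Phi)
qed

lemma Phi_Phi: "Phi (Phi P) = P"
proof -
  interpret Q: poc m "Phi P" using Phi_POC by unfold_locales
  have "Phi (Phi P) = (`) f ` ((`) f ` P)" using Q.Phi_img rho_Phi Phi_img by simp
  also have "\<dots> = P" by (simp add: image_image ff)
  finally show ?thesis .
qed

end

context poc
begin

lemma h_img: "h ` ((\<lambda>k. (a k, b k)) ` K) = (\<lambda>k. (a k, f (b k))) ` K"
  by (auto simp: h_def image_image)

lemma cr_to_ne:
  assumes t: "t > 0" and c: "is_crossing P t S"
  shows "is_nesting (Phi P) t (h ` S)"
proof -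
  obtain a b where S: "S \<subseteq> arcs P" "S = (\<lambda>k. (a k, b k)) ` {..<t}"
    and inc: "\<forall>k. Suc k < t \<longrightarrow> a k < a (Suc k) \<and> b k < b (Suc k)"
    using c unfolding is_crossing_def by blast
  have mem: "\<And>k. k < t \<Longrightarrow> (a k, b k) \<in> arcs P" using S by blast
  have "h ` S \<subseteq> arcs (Phi P)" using S(1) arcs_Phi by blast
  moreover have "h ` S = (\<lambda>k. (a k, f (b k))) ` {..<t}" using S(2) h_img by simp
  moreover have "\<forall>k. Suc k < t \<longrightarrow> a k < a (Suc k) \<and> f (b (Suc k)) < f (b k)"
  proof (intro allI impI)
    fix k assume k: "Suc k < t"
    have "b k \<in> C" "b (Suc k) \<in> C" using mem[of k] mem[of "Suc k"] k arc_C by auto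
    then show "a k < a (Suc k) \<and> f (b (Suc k)) < f (b k)" using inc k fmono by blast
  qed
  moreover have "a (t - 1) < f (b (t - 1))"
  proof -
    have "(a (t-1), b (t-1)) \<in> arcs P" using mem t by simp
    then show ?thesis using arc_O arc_C fC OC by blast
  qed
  ultimately show ?thesis unfolding is_nesting_def
    by (intro conjI exI[of _ a] exI[of _ "\<lambda>k. f (b k)"]) simp_all
qed

lemma ne_to_cr:
  assumes t: "t > 0" and c: "is_nesting P t S"
  shows "is_crossing (Phi P) t (h ` S)"
proof -
  obtain a b where S: "S \<subseteq> arcs P" "S = (\<lambda>k. (a k, b k)) ` {..<t}"
    and inc: "\<forall>k. Suc k < t \<longrightarrow> a k < a (Suc k) \<and> b (Suc k) < b k"
    using c unfolding is_nesting_def by blast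
  have mem: "\<And>k. k < t \<Longrightarrow> (a k, b k) \<in> arcs P" using S by blast
  have "h ` S \<subseteq> arcs (Phi P)" using S(1) arcs_Phi by blast
  moreover have "h ` S = (\<lambda>k. (a k, f (b k))) ` {..<t}" using S(2) h_img by simp
  moreover have "\<forall>k. Suc k < t \<longrightarrow> a k < a (Suc k) \<and> f (b k) < f (b (Suc k))"
  proof (intro allI impI)
    fix k assume k: "Suc k < t"
    have "b k \<in> C" "b (Suc k) \<in> C" using mem[of k] mem[of "Suc k"] k arc_C by auto
    then show "a k < a (Suc k) \<and> f (b k) < f (b (Suc k))" using inc k fmono by blast
  qed
  moreover have "a (t - 1) < f (b 0)"
  proof -
    have "(a (t-1), b (t-1)) \<in> arcs P" "(a 0, b 0) \<in> arcs P" using mem t by simp_all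
    then show ?thesis using arc_O arc_C fC OC by blast
  qed
  ultimately show ?thesis unfolding is_crossing_def
    by (intro conjI exI[of _ a] exI[of _ "\<lambda>k. f (b k)"]) simp_all
qed

lemma h_Phi: "poc.h (Phi P) = h"
proof -
  have "poc.h (Phi P) = (\<lambda>(a,b). (a, rho (Phi P) b))"
    by (rule poc.h_def[OF poc.intro[OF Phi_POC]])
  also have "\<dots> = h" unfolding h_def rho_Phi by (rule refl)
  finally show ?thesis .
qed

lemma img_h_inj: "inj_on ((`) h) A"
  by (rule inj_on_image) (meson h_inj inj_on_subset subset_UNIV)

lemma hhS: "h ` (h ` S) = S" by (simp add: image_image hh)

lemma ne_Phi: assumes t: "t > 0" shows "ne t (Phi P) = cr t P"
proof -
  interpret Q: poc m "Phi P" using Phi_POC by unfold_locales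
  have "{S. is_nesting (Phi P) t S} = (`) h ` {S. is_crossing P t S}"
  proof
    show "(`) h ` {S. is_crossing P t S} \<subseteq> {S. is_nesting (Phi P) t S}"
      using cr_to_ne[OF t] by blast
    show "{S. is_nesting (Phi P) t S} \<subseteq> (`) h ` {S. is_crossing P t S}"
    proof
      fix S assume "S \<in> {S. is_nesting (Phi P) t S}"
      then have "is_crossing (Phi (Phi P)) t (Q.h ` S)" using Q.ne_to_cr[OF t] by blast
      then have "is_crossing P t (h ` S)" using h_Phi Phi_Phi by simp
      then show "S \<in> (`) h ` {S. is_crossing P t S}" by (intro image_eqI[of S _ "h ` S"]) (simp_all add: hhS)
    qed
  qed
  then show ?thesis unfolding ne_def cr_def using img_h_inj by (simp add: card_image)
qed

lemma cr_Phi: assumes t: "t > 0" shows "cr t (Phi P) = ne t P"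
proof -
  interpret Q: poc m "Phi P" using Phi_POC by unfold_locales
  have "{S. is_crossing (Phi P) t S} = (`) h ` {S. is_nesting P t S}"
  proof
    show "(`) h ` {S. is_nesting P t S} \<subseteq> {S. is_crossing (Phi P) t S}"
      using ne_to_cr[OF t] by blast
    show "{S. is_crossing (Phi P) t S} \<subseteq> (`) h ` {S. is_nesting P t S}"
    proof
      fix S assume "S \<in> {S. is_crossing (Phi P) t S}"
      then have "is_nesting (Phi (Phi P)) t (Q.h ` S)" using Q.cr_to_ne[OF t] by blast
      then have "is_nesting P t (h ` S)" using h_Phi Phi_Phi by simp
      then show "S \<in> (`) h ` {S. is_nesting P t S}" by (intro image_eqI[of S _ "h ` S"]) (simp_all add: hhS)
    qed
  qed
  then show ?thesis unfolding ne_def cr_def using img_h_inj by (simp add: card_image)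
qed

end

theorem mainTheorem3:
  fixes m :: nat
  assumes "m \<ge> 2"
  shows "(\<forall>P\<in>POC m. Phi P \<in> POC m \<and> Phi (Phi P) = P) \<and>
         (\<forall>P\<in>POC m. \<forall>t\<ge>2. ne t (Phi P) = cr t P \<and> cr t (Phi P) = ne t P)"
proof -
  have 1: "Phi P \<in> POC m \<and> Phi (Phi P) = P" if "P \<in> POC m" for P
  proof -
    interpret poc m P using that by unfold_locales
    show ?thesis using Phi_POC Phi_Phi by simp
  qed
  have 2: "ne t (Phi P) = cr t P \<and> cr t (Phi P) = ne t P" if "P \<in> POC m" "t \<ge> 2" for P t
  proof -
    interpret poc m P using that(1) by unfold_locales
    show ?thesis using ne_Phi cr_Phi that(2) by simp
  qed
  show ?thesis using 1 2 by blast
qed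

end
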